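(* Let $\boldsymbol k$ be an algebraically closed field with $\operatorname{char}\boldsymbol k\neq 2$, let $V$ be a vector space over $\boldsymbol k$ of finite dimension $n$, and let $\mathcal M:=V^*\otimes V^*\otimes V$. Then there is a nonempty (dense) open subset $U\subseteq\mathcal M$ such that for every $m\in U$ the $\boldsymbol k$-algebra $\{V,m\}$ is simple and has trivial automorphism group.
   Context: For $m=\sum\ell\otimes\ell'\otimes v\in\mathcal M$, the $\boldsymbol k$-algebra $\{V,m\}$ is the (not necessarily associative) algebra structure on $V$ with product $ab:=\sum\ell(a)\ell'(b)v$. Simple means having no two-sided ideals other than $0$ and $V$. The automorphism group of $\{V,m\}$ is the stabilizer of $m$ in $\mathrm{GL}(V)$ acting naturally on $\mathcal M$. *)

theory Defs
  imports "HOL-Computational_Algebra.Polynomial"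
begin

text \<open>V = k^n is modelled as functions 'n \<Rightarrow> 'k on a finite index type 'n (a basis of V).
An element m of V* \<otimes> V* \<otimes> V is given by its structure constants m i j l
(coefficient of e_l in e_i e_j).\<close>

definition alg_closed :: "'k::field itself \<Rightarrow> bool" where
  "alg_closed _ \<longleftrightarrow> (\<forall>p::'k poly. degree p > 0 \<longrightarrow> (\<exists>x. poly p x = 0))"

definition amul :: "('n::finite \<Rightarrow> 'n \<Rightarrow> 'n \<Rightarrow> 'k::field) \<Rightarrow> ('n \<Rightarrow> 'k) \<Rightarrow> ('n \<Rightarrow> 'k) \<Rightarrow> ('n \<Rightarrow> 'k)" where
  "amul m a b = (\<lambda>l. \<Sum>i\<in>UNIV. \<Sum>j\<in>UNIV. a i * b j * m i j l)"

definition is_subspace :: "('n \<Rightarrow> 'k::field) set \<Rightarrow> bool" where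
  "is_subspace I \<longleftrightarrow> (\<lambda>_. 0) \<in> I \<and> (\<forall>x\<in>I. \<forall>y\<in>I. (\<lambda>i. x i + y i) \<in> I)
      \<and> (\<forall>c. \<forall>x\<in>I. (\<lambda>i. c * x i) \<in> I)"

definition two_sided_ideal :: "('n::finite \<Rightarrow> 'n \<Rightarrow> 'n \<Rightarrow> 'k::field) \<Rightarrow> ('n \<Rightarrow> 'k) set \<Rightarrow> bool" where
  "two_sided_ideal m I \<longleftrightarrow> is_subspace I \<and> (\<forall>a. \<forall>x\<in>I. amul m a x \<in> I \<and> amul m x a \<in> I)"

definition simple_alg :: "('n::finite \<Rightarrow> 'n \<Rightarrow> 'n \<Rightarrow> 'k::field) \<Rightarrow> bool" where
  "simple_alg m \<longleftrightarrow> (\<forall>I. two_sided_ideal m I \<longrightarrow> I = {\<lambda>_. 0} \<or> I = UNIV)"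

definition is_linear :: "(('n \<Rightarrow> 'k::field) \<Rightarrow> ('n \<Rightarrow> 'k)) \<Rightarrow> bool" where
  "is_linear g \<longleftrightarrow> (\<forall>x y. g (\<lambda>i. x i + y i) = (\<lambda>i. g x i + g y i))
      \<and> (\<forall>c x. g (\<lambda>i. c * x i) = (\<lambda>i. c * g x i))"

definition automorphisms :: "('n::finite \<Rightarrow> 'n \<Rightarrow> 'n \<Rightarrow> 'k::field) \<Rightarrow> (('n \<Rightarrow> 'k) \<Rightarrow> ('n \<Rightarrow> 'k)) set" where
  "automorphisms m = {g. is_linear g \<and> bij g \<and> (\<forall>a b. g (amul m a b) = amul m (g a) (g b))}"

inductive_set poly_fun :: "(('i \<Rightarrow> 'k::comm_ring_1) \<Rightarrow> 'k) set" where
  const: "(\<lambda>_. c) \<in> poly_fun"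
| coord: "(\<lambda>x. x i) \<in> poly_fun"
| add: "f \<in> poly_fun \<Longrightarrow> g \<in> poly_fun \<Longrightarrow> (\<lambda>x. f x + g x) \<in> poly_fun"
| mult: "f \<in> poly_fun \<Longrightarrow> g \<in> poly_fun \<Longrightarrow> (\<lambda>x. f x * g x) \<in> poly_fun"

definition zariski_open :: "(('i \<Rightarrow> 'k::comm_ring_1)) set \<Rightarrow> bool" where
  "zariski_open U \<longleftrightarrow> (\<exists>F \<subseteq> poly_fun. U = {x. \<exists>f\<in>F. f x \<noteq> 0})"

end

theory Submission
  imports Defs "HOL-Analysis.Determinants"
begin

lemma pf_const0: "(\<lambda>_. 0) \<in> poly_fun" using poly_fun.const[of 0] .

lemma pf_sum:
  assumes "finite S" "\<And>s. s\<in>S \<Longrightarrow> f s \<in> poly_fun"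
  shows "(\<lambda>x. \<Sum>s\<in>S. f s x) \<in> poly_fun"
  using assms by (induction S rule: finite_induct) (auto intro: poly_fun.intros)

lemma pf_prod:
  assumes "finite S" "\<And>s. s\<in>S \<Longrightarrow> f s \<in> poly_fun"
  shows "(\<lambda>x. \<Prod>s\<in>S. f s x) \<in> poly_fun"
  using assms by (induction S rule: finite_induct) (auto intro: poly_fun.intros)

lemma pf_det:
  fixes F :: "('i \<Rightarrow> 'k::comm_ring_1) \<Rightarrow> 'n::finite \<Rightarrow> 'n \<Rightarrow> 'k"
  assumes "\<And>i j. (\<lambda>x. F x i j) \<in> poly_fun"
  shows "(\<lambda>x. det ((\<chi> i j. F x i j) :: 'k^'n^'n)) \<in> poly_fun"
proof -
  have "(\<lambda>x. \<Sum>p\<in>{p. p permutes (UNIV::'n set)}. of_int (sign p) * (\<Prod>i\<in>UNIV. F x i (p i))) \<in> poly_fun"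
    by (intro pf_sum poly_fun.mult poly_fun.const pf_prod assms finite_permutations) auto
  then show ?thesis by (simp add: det_def)
qed

lemma pf_line:
  fixes f :: "('i \<Rightarrow> 'k::comm_ring_1) \<Rightarrow> 'k"
  assumes "f \<in> poly_fun"
  shows "\<exists>P. \<forall>s. f (\<lambda>i. p i + s * (q i - p i)) = poly P s"
  using assms
proof (induction f rule: poly_fun.induct)
  case (const c) then show ?case by (intro exI[of _ "[:c:]"]) simp
next
  case (coord i) then show ?case by (intro exI[of _ "[:p i, q i - p i:]"]) (simp add: algebra_simps)
next
  case (add f g)
  then obtain P Q where "\<forall>s. f (\<lambda>i. p i + s * (q i - p i)) = poly P s" "\<forall>s. g (\<lambda>i. p i + s * (q i - p i)) = poly Q s" by blast
  then show ?case by (intro exI[of _ "P+Q"]) simp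
next
  case (mult f g)
  then obtain P Q where "\<forall>s. f (\<lambda>i. p i + s * (q i - p i)) = poly P s" "\<forall>s. g (\<lambda>i. p i + s * (q i - p i)) = poly Q s" by blast
  then show ?case by (intro exI[of _ "P*Q"]) simp
qed

lemma alg_closed_infinite:
  assumes "alg_closed TYPE('k::field)"
  shows "infinite (UNIV::'k set)"
proof
  assume fin: "finite (UNIV::'k set)"
  define Q :: "'k poly" where "Q = (\<Prod>a\<in>UNIV. [:-a, 1:])"
  have "degree Q = card (UNIV::'k set)"
    unfolding Q_def by (subst degree_prod_eq_sum_degree) auto
  moreover have "card (UNIV::'k set) > 0" using fin by (simp add: finite_UNIV_card_ge_0)
  ultimately have dQ: "degree Q > 0" by simp
  have dQ1: "degree (Q + 1) = degree Q" using dQ by (simp add: degree_add_eq_left)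
  have "0 < degree (Q + 1)" using dQ dQ1 by simp
  then have "\<exists>x. poly (Q + 1) x = 0" using assms unfolding alg_closed_def by (elim allE[of _ "Q+1"]) simp
  then obtain x where "poly (Q + 1) x = 0" by blast
  moreover have "poly Q x = 0" unfolding Q_def poly_prod using fin
    by (intro prod_zero) auto
  ultimately show False by simp
qed

lemma pf_product_nonzero:
  fixes f g :: "('i \<Rightarrow> 'k::field) \<Rightarrow> 'k"
  assumes inf: "infinite (UNIV::'k set)"
    and "f \<in> poly_fun" "g \<in> poly_fun" "f p \<noteq> 0" "g q \<noteq> 0"
  shows "\<exists>x. f x * g x \<noteq> 0"
proof -
  obtain P where P: "\<And>s. f (\<lambda>i. p i + s * (q i - p i)) = poly P s" using pf_line[OF assms(2)] by blast
  obtain Q where Q: "\<And>s. g (\<lambda>i. p i + s * (q i - p i)) = poly Q s" using pf_line[OF assms(3)] by blast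
  have e0: "(\<lambda>i. p i + 0 * (q i - p i)) = p" by simp
  have e1: "(\<lambda>i. p i + 1 * (q i - p i)) = q" by simp
  have "poly P 0 \<noteq> 0" using P[of 0] assms(4) unfolding e0 by simp
  hence "P \<noteq> 0" by auto
  have "poly Q 1 \<noteq> 0" using Q[of 1] assms(5) unfolding e1 by simp
  hence "Q \<noteq> 0" by auto
  hence "P * Q \<noteq> 0" using \<open>P \<noteq> 0\<close> by simp
  hence fin: "finite {s. poly (P*Q) s = 0}" by (rule poly_roots_finite)
  have "{s. poly (P*Q) s = 0} \<noteq> UNIV"
  proof
    assume eq: "{s. poly (P*Q) s = 0} = UNIV"
    have "finite (UNIV::'k set)" using fin unfolding eq .
    with inf show False by simp
  qed
  then obtain s where "poly (P*Q) s \<noteq> 0" by auto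
  then have "f (\<lambda>i. p i + s * (q i - p i)) * g (\<lambda>i. p i + s * (q i - p i)) \<noteq> 0"
    by (simp add: P Q)
  then show ?thesis by blast
qed

definition ev :: "'n::finite \<Rightarrow> 'n \<Rightarrow> 'k::zero_neq_one" where
  "ev a = (\<lambda>i. if i = a then 1 else 0)"

lemma sum_ev: fixes a :: "'n::finite" shows "(\<Sum>i\<in>UNIV. ev a i * F i) = (F a :: 'k::{comm_ring_1})"
proof -
  have "(\<Sum>i\<in>UNIV. ev a i * F i) = (\<Sum>i\<in>UNIV. if i = a then F i else 0)"
    by (rule sum.cong) (auto simp: ev_def)
  then show ?thesis by simp
qed

lemma sum_ev': fixes a :: "'n::finite" shows "(\<Sum>i\<in>UNIV. F i * ev a i) = (F a :: 'k::{comm_ring_1})"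
  using sum_ev[of a F] by (simp add: mult.commute)

lemma amul_ev_left: "amul m (ev a) w = (\<lambda>l. \<Sum>j\<in>UNIV. w j * m a j l)"
proof
  fix l
  have "amul m (ev a) w l = (\<Sum>i\<in>UNIV. ev a i * (\<Sum>j\<in>UNIV. w j * m i j l))"
    unfolding amul_def by (simp add: sum_distrib_left mult.assoc)
  then show "amul m (ev a) w l = (\<Sum>j\<in>UNIV. w j * m a j l)" by (simp only: sum_ev)
qed

lemma amul_ev_right: "amul m x (ev b) = (\<lambda>l. \<Sum>j\<in>UNIV. x j * m j b l)"
proof
  fix l
  have "amul m x (ev b) l = (\<Sum>i\<in>UNIV. x i * (\<Sum>j\<in>UNIV. ev b j * m i j l))"
    unfolding amul_def by (simp add: sum_distrib_left mult_ac)
  then show "amul m x (ev b) l = (\<Sum>j\<in>UNIV. x j * m j b l)" by (simp only: sum_ev)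
qed

lemma amul_ev_ev: "amul m (ev a) (ev b) = m a b"
  unfolding amul_ev_right by (simp only: sum_ev)

definition SA :: "('n::finite \<Rightarrow> 'n \<Rightarrow> 'n \<Rightarrow> 'k::field) \<Rightarrow> 'k^('n\<times>'n)^('n\<times>'n)" where
  "SA m = (\<chi> p q. amul m (ev (fst q)) (amul m (ev (snd p)) (ev (snd q))) (fst p))"

lemma SA_nth: "SA m $ (l,j) $ (a,b) = (\<Sum>j'\<in>UNIV. m j b j' * m a j' l)"
  unfolding SA_def by (simp add: amul_ev_ev) (simp add: amul_ev_left)

lemma LR_expand:
  "amul m (ev a) (amul m x (ev b)) l = (\<Sum>j\<in>UNIV. x j * SA m $ (l,j) $ (a,b))"
proof -
  have "amul m (ev a) (amul m x (ev b)) l = (\<Sum>j'\<in>UNIV. (\<Sum>j\<in>UNIV. x j * m j b j') * m a j' l)"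
    unfolding amul_ev_left amul_ev_right ..
  also have "\<dots> = (\<Sum>j'\<in>UNIV. \<Sum>j\<in>UNIV. x j * m j b j' * m a j' l)"
    by (simp add: sum_distrib_right)
  also have "\<dots> = (\<Sum>j\<in>UNIV. \<Sum>j'\<in>UNIV. x j * m j b j' * m a j' l)"
    by (rule sum.swap)
  also have "\<dots> = (\<Sum>j\<in>UNIV. x j * SA m $ (l,j) $ (a,b))"
    unfolding SA_nth by (simp add: sum_distrib_left mult.assoc)
  finally show ?thesis .
qed

lemma LR_expand':
  "amul m (ev (fst q)) (amul m x (ev (snd q))) l = (\<Sum>j\<in>UNIV. x j * SA m $ (l,j) $ q)"
  by (cases q) (simp only: LR_expand fst_conv snd_conv)

lemma subspace_sum:
  assumes "is_subspace I" "finite S" "\<And>q. q\<in>S \<Longrightarrow> f q \<in> I"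
  shows "(\<lambda>l. \<Sum>q\<in>S. c q * f q l) \<in> I"
  using assms(2,3)
proof (induction S rule: finite_induct)
  case empty then show ?case using assms(1) unfolding is_subspace_def by simp
next
  case (insert a S)
  have "(\<lambda>l. c a * f a l) \<in> I" using assms(1) insert unfolding is_subspace_def by blast
  moreover have "(\<lambda>l. \<Sum>q\<in>S. c q * f q l) \<in> I" using insert by blast
  ultimately have "(\<lambda>i. (\<lambda>l. c a * f a l) i + (\<lambda>l. \<Sum>q\<in>S. c q * f q l) i) \<in> I"
    using assms(1) unfolding is_subspace_def by (simp only: Ball_def)
  then show ?case using insert by simp
qed

lemma simple_of_det:
  fixes m :: "'n::finite \<Rightarrow> 'n \<Rightarrow> 'n \<Rightarrow> 'k::field"
  assumes d: "det (SA m) \<noteq> 0"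
  shows "simple_alg m"
  unfolding simple_alg_def
proof (intro allI impI)
  fix I assume I: "two_sided_ideal m I"
  hence sub: "is_subspace I" unfolding two_sided_ideal_def by blast
  hence z: "(\<lambda>_. 0) \<in> I" unfolding is_subspace_def by blast
  show "I = {\<lambda>_. 0} \<or> I = UNIV"
  proof (cases "I \<subseteq> {\<lambda>_. 0}")
    case True then show ?thesis using z by blast
  next
    case False
    then obtain x where x: "x \<in> I" "x \<noteq> (\<lambda>_. 0)" by blast
    then obtain z where xz: "x z \<noteq> 0" by (meson ext)
    have "y \<in> I" for y
    proof -
      define w :: "'k^('n\<times>'n)" where "w = (\<chi> p. if snd p = z then y (fst p) / x z else 0)"
      from d obtain B where B: "SA m ** B = mat 1"
        unfolding invertible_det_nz[symmetric] invertible_def by blast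
      define cf where "cf = B *v w"
      have cf: "SA m *v cf = w" unfolding cf_def
        by (simp add: matrix_vector_mul_assoc B)
      have mem: "(\<lambda>l. \<Sum>q\<in>UNIV. cf $ q * amul m (ev (fst q)) (amul m x (ev (snd q))) l) \<in> I"
      proof (rule subspace_sum[OF sub])
        fix q :: "'n \<times> 'n"
        have "amul m x (ev (snd q)) \<in> I" using I x unfolding two_sided_ideal_def by blast
        then show "amul m (ev (fst q)) (amul m x (ev (snd q))) \<in> I"
          using I unfolding two_sided_ideal_def by blast
      qed simp
      have "(\<lambda>l. \<Sum>q\<in>UNIV. cf $ q * amul m (ev (fst q)) (amul m x (ev (snd q))) l) = y"
      proof
        fix l
        have "(\<Sum>q\<in>UNIV. cf $ q * amul m (ev (fst q)) (amul m x (ev (snd q))) l)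
            = (\<Sum>q\<in>UNIV. cf $ q * (\<Sum>j\<in>UNIV. x j * SA m $ (l,j) $ q))"
          by (simp only: LR_expand')
        also have "\<dots> = (\<Sum>q\<in>UNIV. \<Sum>j\<in>UNIV. x j * SA m $ (l,j) $ q * cf $ q)"
          by (simp add: sum_distrib_left sum_distrib_right mult_ac)
        also have "\<dots> = (\<Sum>j\<in>UNIV. \<Sum>q\<in>UNIV. x j * SA m $ (l,j) $ q * cf $ q)"
          by (rule sum.swap)
        also have "\<dots> = (\<Sum>j\<in>UNIV. x j * (\<Sum>q\<in>UNIV. SA m $ (l,j) $ q * cf $ q))"
          by (simp add: sum_distrib_left mult.assoc)
        also have "\<dots> = (\<Sum>j\<in>UNIV. x j * w $ (l,j))"
        proof -
          have "\<forall>p. (\<Sum>q\<in>UNIV. SA m $ p $ q * cf $ q) = w $ p"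
            using cf unfolding matrix_vector_mult_def by (simp add: vec_eq_iff)
          then show ?thesis by simp
        qed
        also have "\<dots> = x z * (y l / x z)"
          unfolding w_def by (simp add: if_distrib cong: if_cong)
        also have "\<dots> = y l" using xz by simp
        finally show "(\<Sum>q\<in>UNIV. cf $ q * amul m (ev (fst q)) (amul m x (ev (snd q))) l) = y l" .
      qed
      with mem show ?thesis by simp
    qed
    then show ?thesis by blast
  qed
qed

definition mc :: "('n \<times> 'n \<times> 'n \<Rightarrow> 'k) \<Rightarrow> 'n \<Rightarrow> 'n \<Rightarrow> 'n \<Rightarrow> 'k" where
  "mc c = (\<lambda>i j l. c (i, j, l))"

definition pv :: "(('n::finite \<times> 'n \<times> 'n \<Rightarrow> 'k::comm_ring_1) \<Rightarrow> 'n \<Rightarrow> 'k) \<Rightarrow> bool" where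
  "pv X \<longleftrightarrow> (\<forall>l. (\<lambda>c. X c l) \<in> poly_fun)"

lemma pv_amul:
  fixes X Y :: "('n::finite \<times> 'n \<times> 'n \<Rightarrow> 'k::field) \<Rightarrow> 'n \<Rightarrow> 'k"
  assumes "pv X" "pv Y"
  shows "pv (\<lambda>c. amul (mc c) (X c) (Y c))"
  unfolding pv_def amul_def mc_def
proof
  fix l
  show "(\<lambda>c. \<Sum>i\<in>UNIV. \<Sum>j\<in>UNIV. X c i * Y c j * c (i, j, l)) \<in> poly_fun"
    using assms unfolding pv_def
    by (intro pf_sum poly_fun.mult poly_fun.coord) auto
qed

lemma pv_ev: "pv (\<lambda>c. ev a)"
  unfolding pv_def by (auto intro: poly_fun.const)

lemma pf_SA: "(\<lambda>c. det (SA (mc c :: 'n::finite \<Rightarrow> 'n \<Rightarrow> 'n \<Rightarrow> 'k::field))) \<in> poly_fun"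
proof -
  have "(\<lambda>c :: 'n\<times>'n\<times>'n \<Rightarrow> 'k. det ((\<chi> p q. (\<lambda>c p q. amul (mc c) (ev (fst q)) (amul (mc c) (ev (snd p)) (ev (snd q))) (fst p)) c p q) :: 'k^('n\<times>'n)^('n\<times>'n))) \<in> poly_fun"
  proof (rule pf_det)
    fix p q :: "'n \<times> 'n"
    have pvX: "pv (\<lambda>c. amul (mc c) (ev (fst q)) (amul (mc c) (ev (snd p)) (ev (snd q))) :: 'n \<Rightarrow> 'k)"
      by (intro pv_amul pv_ev)
    show "(\<lambda>c :: 'n\<times>'n\<times>'n \<Rightarrow> 'k. (\<lambda>c p q. amul (mc c) (ev (fst q)) (amul (mc c) (ev (snd p)) (ev (snd q))) (fst p)) c p q) \<in> poly_fun"
      using pvX unfolding pv_def by blast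
  qed
  then show ?thesis unfolding SA_def by simp
qed

definition mX :: "'n \<Rightarrow> 'n \<Rightarrow> 'n \<Rightarrow> 'n \<Rightarrow> 'k::field" where
  "mX z i j l = (if j = z \<and> l = i then 1 else 0) + (if j \<noteq> z \<and> i = j \<and> l = z then 1 else 0)"

lemma SA_mX:
  fixes z :: "'n::finite"
  shows "SA (mX z :: _ \<Rightarrow> _ \<Rightarrow> _ \<Rightarrow> 'k::field) $ (l,j) $ (a,b) =
    (if b = z then (if j = z \<and> l = a then 1 else 0) + (if j \<noteq> z \<and> a = j \<and> l = z then 1 else 0)
     else (if j = b \<and> l = a then 1 else 0))"
proof (cases "b = z")
  case True
  have "SA (mX z :: _ \<Rightarrow> _ \<Rightarrow> _ \<Rightarrow> 'k) $ (l,j) $ (a,b) = (\<Sum>j'\<in>UNIV. (if j' = j then mX z a j' l else 0))"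
    unfolding SA_nth by (rule sum.cong) (auto simp: mX_def True)
  also have "\<dots> = mX z a j l" by simp
  finally show ?thesis using True by (simp add: mX_def)
next
  case False
  have "SA (mX z :: _ \<Rightarrow> _ \<Rightarrow> _ \<Rightarrow> 'k) $ (l,j) $ (a,b) = (\<Sum>j'\<in>UNIV. (if j' = z then (if j = b then mX z a j' l else 0) else 0))"
    unfolding SA_nth by (rule sum.cong) (auto simp: mX_def False)
  also have "\<dots> = (if j = b then mX z a z l else 0)" by simp
  finally show ?thesis using False by (auto simp: mX_def)
qed

lemma sum_delta_r: "(\<Sum>r\<in>UNIV. f r * (if r = a then 1 else 0)) = (f (a::'a::finite) :: 'k::comm_ring_1)"
proof -
  have "(\<Sum>r\<in>UNIV. f r * (if r = a then 1 else 0)) = (\<Sum>r\<in>UNIV. if r = a then f r else 0)"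
    by (rule sum.cong) auto
  then show ?thesis by simp
qed

definition BX :: "'n::finite \<Rightarrow> 'k::field^('n\<times>'n)^('n\<times>'n)" where
  "BX z = (\<chi> r q. (if r = q then 1 else 0) - (if snd q = z \<and> fst q \<noteq> z \<and> r = (z, fst q) then 1 else 0))"

lemma SA_mX_inv:
  fixes z :: "'n::finite"
  shows "SA (mX z :: _ \<Rightarrow> _ \<Rightarrow> _ \<Rightarrow> 'k::field) ** BX z = mat 1"
proof -
  let ?S = "SA (mX z :: _ \<Rightarrow> _ \<Rightarrow> _ \<Rightarrow> 'k::field)"
  have "(?S ** BX z) $ p $ q = (if p = q then 1 else 0)" for p q
  proof -
    have "(?S ** BX z) $ p $ q = (\<Sum>r\<in>UNIV. ?S $ p $ r * (if r = q then 1 else 0))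
        - (\<Sum>r\<in>UNIV. ?S $ p $ r * (if snd q = z \<and> fst q \<noteq> z \<and> r = (z, fst q) then 1 else 0))"
      unfolding matrix_matrix_mult_def BX_def by (simp add: right_diff_distrib sum_subtractf)
    also have "\<dots> = ?S $ p $ q - (if snd q = z \<and> fst q \<noteq> z then ?S $ p $ (z, fst q) else 0)"
    proof -
      have sec: "(\<Sum>r\<in>UNIV. ?S $ p $ r * (if snd q = z \<and> fst q \<noteq> z \<and> r = (z, fst q) then 1 else 0))
          = (if snd q = z \<and> fst q \<noteq> z then ?S $ p $ (z, fst q) else 0)"
      proof (cases "snd q = z \<and> fst q \<noteq> z")
        case True
        have "(\<Sum>r\<in>UNIV. ?S $ p $ r * (if snd q = z \<and> fst q \<noteq> z \<and> r = (z, fst q) then 1 else 0))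
            = (\<Sum>r\<in>UNIV. ?S $ p $ r * (if r = (z, fst q) then 1 else 0))"
          using True by simp
        also have "\<dots> = ?S $ p $ (z, fst q)" by (rule sum_delta_r)
        finally show ?thesis using True by simp
      next
        case False
        then have "\<And>r. (if snd q = z \<and> fst q \<noteq> z \<and> r = (z, fst q) then 1 else 0) = (0::'k)" by auto
        then show ?thesis using False by (simp only: if_not_P[OF False] mult_zero_right sum.neutral_const if_False)
      qed
      show ?thesis by (simp only: sum_delta_r sec)
    qed
    also have "\<dots> = (if p = q then 1 else 0)"
    proof -
      obtain l' j' where p: "p = (l', j')" by (cases p)
      obtain l j where q: "q = (l, j)" by (cases q)
      show ?thesis
      proof (cases "j = z")
        case False
        then show ?thesis by (simp add: p q SA_mX)
      next
        case True
        show ?thesis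
        proof (cases "l = z")
          case True
          then show ?thesis using \<open>j = z\<close> by (simp add: p q SA_mX)
        next
          case False
          then show ?thesis using \<open>j = z\<close> by (simp add: p q SA_mX)
        qed
      qed
    qed
    finally show ?thesis .
  qed
  then show ?thesis by (simp add: vec_eq_iff mat_def)
qed

lemma det_SA_mX: "det (SA (mX z :: _ \<Rightarrow> _ \<Rightarrow> _ \<Rightarrow> 'k::field)) \<noteq> 0"
proof
  assume "det (SA (mX z :: _ \<Rightarrow> _ \<Rightarrow> _ \<Rightarrow> 'k::field)) = 0"
  then have "det (SA (mX z :: _ \<Rightarrow> _ \<Rightarrow> _ \<Rightarrow> 'k::field) ** BX z) = 0" by (simp add: det_mul)
  then show False by (simp add: SA_mX_inv det_I)
qed

lemma lin_add: "is_linear F \<Longrightarrow> F (\<lambda>i. x i + y i) = (\<lambda>i. F x i + F y i)"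
  unfolding is_linear_def by blast
lemma lin_scale: "is_linear F \<Longrightarrow> F (\<lambda>i. c * x i) = (\<lambda>i. c * F x i)"
  unfolding is_linear_def by blast

lemma lin_zero: "is_linear F \<Longrightarrow> F (\<lambda>i. 0) = (\<lambda>i. 0)"
  using lin_scale[of F 0 "\<lambda>i. 0"] by simp

lemma lin_sum:
  assumes "is_linear F" "finite S"
  shows "F (\<lambda>i. \<Sum>j\<in>S. c j * X j i) = (\<lambda>l. \<Sum>j\<in>S. c j * F (X j) l)"
  using assms(2)
proof (induction S rule: finite_induct)
  case empty then show ?case using lin_zero[OF assms(1)] by simp
next
  case (insert a S)
  have "F (\<lambda>i. \<Sum>j\<in>insert a S. c j * X j i) = F (\<lambda>i. (\<lambda>i. c a * X a i) i + (\<lambda>i. \<Sum>j\<in>S. c j * X j i) i)"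
    using insert by simp
  also have "\<dots> = (\<lambda>i. F (\<lambda>i. c a * X a i) i + F (\<lambda>i. \<Sum>j\<in>S. c j * X j i) i)"
    by (rule lin_add[OF assms(1)])
  also have "\<dots> = (\<lambda>l. \<Sum>j\<in>insert a S. c j * F (X j) l)"
    using insert lin_scale[OF assms(1), of "c a" "X a"] by simp
  finally show ?case .
qed

lemma ev_expand: "(\<lambda>i. \<Sum>j\<in>UNIV. x j * ev j i) = (x :: 'n::finite \<Rightarrow> 'k::comm_ring_1)"
proof
  fix i
  have "(\<Sum>j\<in>UNIV. x j * ev j i) = (\<Sum>j\<in>UNIV. if j = i then x j else 0)"
    by (rule sum.cong) (auto simp: ev_def)
  then show "(\<Sum>j\<in>UNIV. x j * ev j i) = x i" by simp
qed

lemma lin_expand: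
  fixes F :: "('n::finite \<Rightarrow> 'k::field) \<Rightarrow> 'n \<Rightarrow> 'k"
  assumes "is_linear F"
  shows "F x l = (\<Sum>j\<in>UNIV. x j * F (ev j) l)"
  using lin_sum[OF assms, of UNIV x ev] ev_expand[of x] by (metis finite)

definition tr :: "(('n::finite \<Rightarrow> 'k::field) \<Rightarrow> 'n \<Rightarrow> 'k) \<Rightarrow> 'k" where
  "tr F = (\<Sum>i\<in>UNIV. F (ev i) i)"

lemma tr_comm:
  fixes F G :: "('n::finite \<Rightarrow> 'k::field) \<Rightarrow> 'n \<Rightarrow> 'k"
  assumes "is_linear F" "is_linear G"
  shows "tr (F \<circ> G) = tr (G \<circ> F)"
proof -
  have "tr (F \<circ> G) = (\<Sum>i\<in>UNIV. \<Sum>j\<in>UNIV. G (ev i) j * F (ev j) i)"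
    unfolding tr_def o_def by (subst lin_expand[OF assms(1)]) simp
  also have "\<dots> = (\<Sum>j\<in>UNIV. \<Sum>i\<in>UNIV. G (ev i) j * F (ev j) i)" by (rule sum.swap)
  also have "\<dots> = (\<Sum>j\<in>UNIV. \<Sum>i\<in>UNIV. F (ev j) i * G (ev i) j)" by (simp add: mult.commute)
  also have "\<dots> = tr (G \<circ> F)"
    unfolding tr_def o_def by (subst lin_expand[OF assms(2)]) simp
  finally show ?thesis .
qed

lemma lin_comp: "is_linear F \<Longrightarrow> is_linear G \<Longrightarrow> is_linear (F \<circ> G)"
  unfolding is_linear_def o_def by simp

lemma lin_inv:
  assumes "is_linear g" "bij g"
  shows "is_linear (inv g)"
proof -
  have gi: "g (inv g y) = y" for y using assms(2) by (simp add: bij_is_surj surj_f_inv_f)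
  have ig: "inv g (g x) = x" for x using assms(2) by (simp add: bij_is_inj)
  show ?thesis unfolding is_linear_def
  proof (intro conjI allI)
    fix x y
    have "g (\<lambda>i. inv g x i + inv g y i) = (\<lambda>i. x i + y i)"
      using lin_add[OF assms(1)] gi by simp
    then show "inv g (\<lambda>i. x i + y i) = (\<lambda>i. inv g x i + inv g y i)" using ig by metis
  next
    fix c x
    have "g (\<lambda>i. c * inv g x i) = (\<lambda>i. c * x i)"
      using lin_scale[OF assms(1)] gi by simp
    then show "inv g (\<lambda>i. c * x i) = (\<lambda>i. c * inv g x i)" using ig by metis
  qed
qed

lemma lin_L: "is_linear (amul m x)"
  unfolding is_linear_def amul_def
  by (simp add: algebra_simps sum.distrib sum_distrib_left)

definition tau :: "('n::finite \<Rightarrow> 'n \<Rightarrow> 'n \<Rightarrow> 'k::field) \<Rightarrow> 'n \<Rightarrow> 'k" where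
  "tau m a = (\<Sum>i\<in>UNIV. m a i i)"

definition tt :: "('n::finite \<Rightarrow> 'n \<Rightarrow> 'n \<Rightarrow> 'k::field) \<Rightarrow> ('n \<Rightarrow> 'k) \<Rightarrow> 'k" where
  "tt m x = tr (amul m x)"

lemma tt_expand: "tt m x = (\<Sum>a\<in>UNIV. x a * tau m a)"
proof -
  have "tt m x = (\<Sum>i\<in>UNIV. \<Sum>j\<in>UNIV. x j * m j i i)"
    unfolding tt_def tr_def amul_ev_right ..
  also have "\<dots> = (\<Sum>j\<in>UNIV. \<Sum>i\<in>UNIV. x j * m j i i)" by (rule sum.swap)
  also have "\<dots> = (\<Sum>a\<in>UNIV. x a * tau m a)" unfolding tau_def by (simp add: sum_distrib_left)
  finally show ?thesis .
qed

lemma aut_props: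
  assumes "g \<in> automorphisms m"
  shows "is_linear g" "bij g" "\<And>a b. g (amul m a b) = amul m (g a) (g b)"
  using assms unfolding automorphisms_def by auto

lemma tt_inv:
  assumes g: "g \<in> automorphisms m"
  shows "tt m (g x) = tt m x"
proof -
  note gl = aut_props[OF g]
  let ?h = "inv g"
  have gi: "g (?h y) = y" for y using gl(2) by (simp add: bij_is_surj surj_f_inv_f)
  have ig: "?h (g y) = y" for y using gl(2) by (simp add: bij_is_inj)
  have hl: "is_linear ?h" using lin_inv gl by blast
  have e1: "amul m (g x) = g \<circ> (amul m x \<circ> ?h)"
  proof
    fix y
    have "amul m (g x) y = amul m (g x) (g (?h y))" using gi by simp
    also have "\<dots> = g (amul m x (?h y))" using gl(3) by simp
    finally show "amul m (g x) y = (g \<circ> (amul m x \<circ> ?h)) y" by simp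
  qed
  have e2: "(amul m x \<circ> ?h) \<circ> g = amul m x"
    using ig by (simp add: o_def)
  have "tt m (g x) = tr (g \<circ> (amul m x \<circ> ?h))" unfolding tt_def e1 ..
  also have "\<dots> = tr ((amul m x \<circ> ?h) \<circ> g)"
    by (rule tr_comm[OF gl(1) lin_comp[OF lin_L hl]])
  also have "\<dots> = tt m x" unfolding e2 tt_def ..
  finally show ?thesis .
qed

definition TT :: "('n::finite \<Rightarrow> 'n \<Rightarrow> 'n \<Rightarrow> 'k::field) \<Rightarrow> 'n \<Rightarrow> 'n \<Rightarrow> 'k" where
  "TT m i j = (\<Sum>l\<in>UNIV. m i j l * tau m l)"

lemma triple_swap:
  fixes f :: "'a::finite \<Rightarrow> 'b::finite \<Rightarrow> 'c::finite \<Rightarrow> 'k::comm_ring_1"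
  shows "(\<Sum>a\<in>UNIV. \<Sum>i\<in>UNIV. \<Sum>j\<in>UNIV. f a i j) = (\<Sum>j\<in>UNIV. \<Sum>i\<in>UNIV. \<Sum>a\<in>UNIV. f a i j)"
proof -
  have "(\<Sum>a\<in>UNIV. \<Sum>i\<in>UNIV. \<Sum>j\<in>UNIV. f a i j) = (\<Sum>a\<in>UNIV. \<Sum>j\<in>UNIV. \<Sum>i\<in>UNIV. f a i j)"
    by (rule sum.cong[OF refl], rule sum.swap)
  also have "\<dots> = (\<Sum>j\<in>UNIV. \<Sum>a\<in>UNIV. \<Sum>i\<in>UNIV. f a i j)" by (rule sum.swap)
  also have "\<dots> = (\<Sum>j\<in>UNIV. \<Sum>i\<in>UNIV. \<Sum>a\<in>UNIV. f a i j)"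
    by (rule sum.cong[OF refl], rule sum.swap)
  finally show ?thesis .
qed

lemma tt_amul: "tt m (amul m x y) = (\<Sum>j\<in>UNIV. y j * (\<Sum>i\<in>UNIV. TT m i j * x i))"
proof -
  have "tt m (amul m x y) = (\<Sum>a\<in>UNIV. \<Sum>i\<in>UNIV. \<Sum>j\<in>UNIV. x i * y j * m i j a * tau m a)"
    unfolding tt_expand amul_def by (simp add: sum_distrib_right)
  also have "\<dots> = (\<Sum>j\<in>UNIV. \<Sum>i\<in>UNIV. \<Sum>a\<in>UNIV. x i * y j * m i j a * tau m a)"
    by (rule triple_swap)
  also have "\<dots> = (\<Sum>j\<in>UNIV. y j * (\<Sum>i\<in>UNIV. TT m i j * x i))"
    unfolding TT_def by (simp add: sum_distrib_left sum_distrib_right mult_ac)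
  finally show ?thesis .
qed

definition MM :: "('n::finite \<Rightarrow> 'n \<Rightarrow> 'n \<Rightarrow> 'k::field) \<Rightarrow> 'k^'n^'n" where
  "MM m = (\<chi> j i. TT m i j)"

definition tv :: "('n::finite \<Rightarrow> 'n \<Rightarrow> 'n \<Rightarrow> 'k::field) \<Rightarrow> 'k^'n" where
  "tv m = (\<chi> j. tau m j)"

definition vv :: "('n::finite \<Rightarrow> 'n \<Rightarrow> 'n \<Rightarrow> 'k::field) \<Rightarrow> 'n \<Rightarrow> 'k" where
  "vv m k = det (\<chi> i j. if j = k then tv m $ i else MM m $ i $ j)"

primrec Lpow :: "('n::finite \<Rightarrow> 'n \<Rightarrow> 'n \<Rightarrow> 'k::field) \<Rightarrow> ('n \<Rightarrow> 'k) \<Rightarrow> nat \<Rightarrow> ('n \<Rightarrow> 'k) \<Rightarrow> ('n \<Rightarrow> 'k)" where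
  "Lpow m u 0 x = x"
| "Lpow m u (Suc k) x = amul m u (Lpow m u k x)"

definition WW :: "('n::finite \<Rightarrow> 'n \<Rightarrow> 'n \<Rightarrow> 'k::field) \<Rightarrow> ('n \<Rightarrow> nat) \<Rightarrow> 'k^'n^'n" where
  "WW m h = (\<chi> l j. Lpow m (vv m) (h j) (vv m) l)"

lemma sol_iff: "MM m *v (\<chi> k. w k) = tv m \<longleftrightarrow> (\<forall>j. (\<Sum>i\<in>UNIV. TT m i j * w i) = tau m j)"
  unfolding matrix_vector_mult_def MM_def tv_def by (simp add: vec_eq_iff)

lemma Lpow_fix:
  assumes g: "g \<in> automorphisms m" and gu: "g u = u"
  shows "g (Lpow m u k u) = Lpow m u k u"
  by (induction k) (simp_all add: gu aut_props(3)[OF g])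

lemma amul_scale: "amul m (\<lambda>i. a * x i) (\<lambda>i. b * y i) = (\<lambda>l. a * b * amul m x y l)"
  unfolding amul_def by (simp add: sum_distrib_left mult_ac)

lemma amul_scale_r: "amul m x (\<lambda>i. b * y i) = (\<lambda>l. b * amul m x y l)"
  unfolding amul_def by (simp add: sum_distrib_left mult_ac)

lemma Lpow_scale: "Lpow m (\<lambda>i. d * u i) k (\<lambda>i. d * u i) = (\<lambda>l. d ^ Suc k * Lpow m u k u l)"
proof (induction k)
  case 0 then show ?case by simp
next
  case (Suc k)
  have "Lpow m (\<lambda>i. d * u i) (Suc k) (\<lambda>i. d * u i) = amul m (\<lambda>i. d * u i) (\<lambda>l. d ^ Suc k * Lpow m u k u l)"
    using Suc by simp
  also have "\<dots> = (\<lambda>l. d * d ^ Suc k * amul m u (Lpow m u k u) l)"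
    using amul_scale[of m d u "d ^ Suc k" "Lpow m u k u"] by simp
  finally show ?case by (simp add: mult_ac)
qed

lemma rigid:
  fixes m :: "'n::finite \<Rightarrow> 'n \<Rightarrow> 'n \<Rightarrow> 'k::field"
  assumes dM: "det (MM m) \<noteq> 0" and dW: "det (WW m h) \<noteq> 0" and g: "g \<in> automorphisms m"
  shows "g = id"
proof -
  note gl = aut_props[OF g]
  define d where "d = det (MM m)"
  define u where "u = (\<lambda>k. vv m k / d)"
  have ueq: "(\<chi> k. u k) = (\<chi> k. det(\<chi> i j. if j=k then tv m $ i else MM m $ i $ j) / det (MM m))"
    unfolding u_def vv_def d_def ..
  have "MM m *v (\<chi> k. u k) = tv m" using cramer[OF dM, of "\<chi> k. u k" "tv m"] ueq by simp
  hence usol: "\<forall>j. (\<Sum>i\<in>UNIV. TT m i j * u i) = tau m j" using sol_iff by blast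
  have ttu: "tt m (amul m u y) = tt m y" for y
  proof -
    have "tt m (amul m u y) = (\<Sum>j\<in>UNIV. y j * (\<Sum>i\<in>UNIV. TT m i j * u i))" by (rule tt_amul)
    also have "\<dots> = (\<Sum>j\<in>UNIV. y j * tau m j)" using usol by simp
    also have "\<dots> = tt m y" by (simp add: tt_expand)
    finally show ?thesis .
  qed
  have gi: "g (inv g y) = y" for y using gl(2) by (simp add: bij_is_surj surj_f_inv_f)
  have gusol: "\<forall>j. (\<Sum>i\<in>UNIV. TT m i j * g u i) = tau m j"
  proof
    fix j
    have "(\<Sum>i\<in>UNIV. TT m i j * g u i) = tt m (amul m (g u) (ev j))"
      unfolding tt_amul by (simp add: sum_ev)
    also have "\<dots> = tt m (amul m (g u) (g (inv g (ev j))))" using gi by simp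
    also have "\<dots> = tt m (g (amul m u (inv g (ev j))))" using gl(3) by simp
    also have "\<dots> = tt m (inv g (ev j))" using tt_inv[OF g] ttu by simp
    also have "\<dots> = tt m (g (inv g (ev j)))" using tt_inv[OF g] by simp
    also have "\<dots> = tau m j" using gi by (simp add: tt_expand sum_ev)
    finally show "(\<Sum>i\<in>UNIV. TT m i j * g u i) = tau m j" .
  qed
  hence "MM m *v (\<chi> k. g u k) = tv m" using sol_iff by blast
  hence "(\<chi> k. g u k) = (\<chi> k. u k)" using cramer[OF dM, of "\<chi> k. g u k" "tv m"] ueq by simp
  hence gu: "g u = u" by (simp add: vec_eq_iff fun_eq_iff)
  have vvu: "vv m = (\<lambda>i. d * u i)" using dM unfolding u_def d_def by (simp add: fun_eq_iff)
  have col: "(\<lambda>l. WW m h $ l $ j) = (\<lambda>l. d ^ Suc (h j) * Lpow m u (h j) u l)" for j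
    unfolding WW_def vvu Lpow_scale by simp
  have gcol: "g (\<lambda>l. WW m h $ l $ j) = (\<lambda>l. WW m h $ l $ j)" for j
    unfolding col lin_scale[OF gl(1)] Lpow_fix[OF g gu] ..
  from dW obtain B where B: "WW m h ** B = mat 1"
    unfolding invertible_det_nz[symmetric] invertible_def by blast
  show "g = id"
  proof
    fix y
    define cf where "cf = B *v (\<chi> l. y l)"
    have cf: "WW m h *v cf = (\<chi> l. y l)" unfolding cf_def
      by (simp add: matrix_vector_mul_assoc B)
    have yexp: "y = (\<lambda>l. \<Sum>j\<in>UNIV. cf $ j * (\<lambda>l. WW m h $ l $ j) l)"
    proof
      fix l
      have "(WW m h *v cf) $ l = y l" using cf by simp
      then show "y l = (\<Sum>j\<in>UNIV. cf $ j * (\<lambda>l. WW m h $ l $ j) l)"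
        unfolding matrix_vector_mult_def by (simp add: mult.commute)
    qed
    have "g y = (\<lambda>l. \<Sum>j\<in>UNIV. cf $ j * g (\<lambda>l. WW m h $ l $ j) l)"
      by (subst yexp, rule lin_sum[OF gl(1)]) simp
    also have "\<dots> = y" unfolding gcol using yexp by simp
    finally show "g y = id y" by simp
  qed
qed

lemma id_aut: "id \<in> automorphisms m"
  unfolding automorphisms_def is_linear_def by simp

lemma pf_if: "f \<in> poly_fun \<Longrightarrow> g \<in> poly_fun \<Longrightarrow> (\<lambda>c. if P then f c else g c) \<in> poly_fun"
  by (cases P) auto

lemma pf_tau: "(\<lambda>c. tau (mc c) a) \<in> poly_fun"
  unfolding tau_def mc_def by (intro pf_sum poly_fun.coord) auto

lemma pf_TT: "(\<lambda>c. TT (mc c) i j) \<in> poly_fun"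
  unfolding TT_def by (intro pf_sum poly_fun.mult pf_tau) (auto simp: mc_def intro: poly_fun.coord)

lemma pf_MM: "(\<lambda>c. det (MM (mc c :: 'n::finite \<Rightarrow> 'n \<Rightarrow> 'n \<Rightarrow> 'k::field))) \<in> poly_fun"
proof -
  have "(\<lambda>c :: 'n\<times>'n\<times>'n \<Rightarrow> 'k. det ((\<chi> j i. (\<lambda>c j i. TT (mc c) i j) c j i) :: 'k^'n^'n)) \<in> poly_fun"
    by (rule pf_det) (simp add: pf_TT)
  then show ?thesis unfolding MM_def by simp
qed

lemma vv_alt: "vv m k = det (\<chi> i j. if j = k then tau m i else TT m j i)"
  unfolding vv_def tv_def MM_def
  by (rule arg_cong[where f=det]) (simp add: vec_eq_iff)

lemma pv_vv: "pv (\<lambda>c. vv (mc c :: 'n::finite \<Rightarrow> 'n \<Rightarrow> 'n \<Rightarrow> 'k::field))"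
  unfolding pv_def
proof
  fix k :: 'n
  have "(\<lambda>c :: 'n\<times>'n\<times>'n \<Rightarrow> 'k. det ((\<chi> i j. (\<lambda>c i j. if j = k then tau (mc c) i else TT (mc c) j i) c i j) :: 'k^'n^'n)) \<in> poly_fun"
    by (rule pf_det) (simp add: pf_if pf_TT pf_tau)
  then show "(\<lambda>c. vv (mc c :: 'n::finite \<Rightarrow> 'n \<Rightarrow> 'n \<Rightarrow> 'k::field) k) \<in> poly_fun"
    unfolding vv_alt by simp
qed

lemma pv_Lpow:
  assumes "pv U" "pv X"
  shows "pv (\<lambda>c. Lpow (mc c) (U c) k (X c))"
  by (induction k) (simp_all add: assms pv_amul)

lemma pf_WW: "(\<lambda>c. det (WW (mc c :: 'n::finite \<Rightarrow> 'n \<Rightarrow> 'n \<Rightarrow> 'k::field) h)) \<in> poly_fun"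
proof -
  have "(\<lambda>c :: 'n\<times>'n\<times>'n \<Rightarrow> 'k. det ((\<chi> l j. (\<lambda>c l j. Lpow (mc c) (vv (mc c)) (h j) (vv (mc c)) l) c l j) :: 'k^'n^'n)) \<in> poly_fun"
  proof (rule pf_det)
    fix l j :: 'n
    have "pv (\<lambda>c :: 'n\<times>'n\<times>'n \<Rightarrow> 'k. Lpow (mc c) (vv (mc c)) (h j) (vv (mc c)))"
      by (intro pv_Lpow pv_vv)
    then show "(\<lambda>c :: 'n\<times>'n\<times>'n \<Rightarrow> 'k. (\<lambda>c l j. Lpow (mc c) (vv (mc c)) (h j) (vv (mc c)) l) c l j) \<in> poly_fun"
      unfolding pv_def by simp
  qed
  then show ?thesis unfolding WW_def by simp
qed

locale enum_n =
  fixes h :: "'n::finite \<Rightarrow> nat"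
  assumes hb: "bij_betw h UNIV {0..<CARD('n)}"
begin

lemma h_inj: "h a = h b \<Longrightarrow> a = b"
  using hb unfolding bij_betw_def inj_on_def by blast

lemma h_lt: "h a < CARD('n)"
  using hb unfolding bij_betw_def by auto

lemma h_inv: "k < CARD('n) \<Longrightarrow> h (inv h k) = k"
  using hb unfolding bij_betw_def by (auto intro: f_inv_into_f)

lemma inv_h: "inv h (h a) = a"
  using hb unfolding bij_betw_def by (simp add: inv_f_f)

lemma N_pos: "0 < CARD('n)" by (simp add: finite_UNIV_card_ge_0)

definition succ :: "'n \<Rightarrow> 'n" where
  "succ b = (if Suc (h b) < CARD('n) then inv h (Suc (h b)) else b)"

definition mY :: "'n \<Rightarrow> 'n \<Rightarrow> 'n \<Rightarrow> 'k::field" where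
  "mY a b l = (if h a = 0 then (if l = succ b then 1 else 0) else (if a = b \<and> l = a then 1 else 0))"

definition z0 :: 'n where "z0 = inv h 0"

lemma h_z0: "h z0 = 0" unfolding z0_def using h_inv N_pos by blast

lemma succ_fix: "(i = succ i) \<longleftrightarrow> i = inv h (CARD('n) - 1)"
proof
  assume "i = succ i"
  then have "\<not> Suc (h i) < CARD('n)"
    unfolding succ_def using h_inv by (metis n_not_Suc_n)
  then have "h i = CARD('n) - 1" using h_lt[of i] by linarith
  then show "i = inv h (CARD('n) - 1)" using inv_h by metis
next
  assume "i = inv h (CARD('n) - 1)"
  then have "h i = CARD('n) - 1" using h_inv N_pos by simp
  then show "i = succ i" unfolding succ_def by simp
qed

lemma tau_Y: "tau (mY :: _ \<Rightarrow> _ \<Rightarrow> _ \<Rightarrow> 'k::field) a = 1"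
proof (cases "h a = 0")
  case True
  have "tau (mY :: _ \<Rightarrow> _ \<Rightarrow> _ \<Rightarrow> 'k) a = (\<Sum>i\<in>UNIV. if i = inv h (CARD('n) - 1) then 1 else 0)"
    unfolding tau_def by (rule sum.cong) (auto simp: mY_def True succ_fix)
  then show ?thesis by simp
next
  case False
  have "tau (mY :: _ \<Rightarrow> _ \<Rightarrow> _ \<Rightarrow> 'k) a = (\<Sum>i\<in>UNIV. if i = a then 1 else 0)"
    unfolding tau_def by (rule sum.cong) (auto simp: mY_def False)
  then show ?thesis by simp
qed

lemma TT_Y: "TT (mY :: _ \<Rightarrow> _ \<Rightarrow> _ \<Rightarrow> 'k::field) i j = (if h i = 0 then 1 else if i = j then 1 else 0)"
proof (cases "h i = 0")
  case True
  have "TT (mY :: _ \<Rightarrow> _ \<Rightarrow> _ \<Rightarrow> 'k) i j = (\<Sum>l\<in>UNIV. if l = succ j then 1 else 0)"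
    unfolding TT_def tau_Y by (rule sum.cong) (auto simp: mY_def True)
  then show ?thesis using True by simp
next
  case False
  have "TT (mY :: _ \<Rightarrow> _ \<Rightarrow> _ \<Rightarrow> 'k) i j = (\<Sum>l\<in>UNIV. if l = i then (if i = j then 1 else 0) else 0)"
    unfolding TT_def tau_Y by (rule sum.cong) (auto simp: mY_def False)
  then show ?thesis using False by simp
qed

definition NN :: "'k::field^'n^'n" where
  "NN = (\<chi> r b. (if r = b then 1 else 0) - (if h b = 0 \<and> r \<noteq> b then 1 else 0))"

lemma MM_Y_inv: "MM (mY :: _ \<Rightarrow> _ \<Rightarrow> _ \<Rightarrow> 'k::field) ** NN = mat 1"
proof -
  have "(MM (mY :: _ \<Rightarrow> _ \<Rightarrow> _ \<Rightarrow> 'k) ** NN) $ a $ b = (if a = b then 1 else 0)" for a b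
  proof -
    have e: "(MM (mY :: _ \<Rightarrow> _ \<Rightarrow> _ \<Rightarrow> 'k) ** NN) $ a $ b
        = (\<Sum>r\<in>UNIV. TT (mY :: _ \<Rightarrow> _ \<Rightarrow> _ \<Rightarrow> 'k) r a * ((if r = b then 1 else 0) - (if h b = 0 \<and> r \<noteq> b then 1 else 0)))"
      unfolding matrix_matrix_mult_def MM_def NN_def by simp
    show ?thesis
    proof (cases "h b = 0")
      case False
      have "(MM (mY :: _ \<Rightarrow> _ \<Rightarrow> _ \<Rightarrow> 'k) ** NN) $ a $ b = (\<Sum>r\<in>UNIV. if r = b then TT (mY :: _ \<Rightarrow> _ \<Rightarrow> _ \<Rightarrow> 'k) r a else 0)"
        unfolding e by (rule sum.cong) (auto simp: False)
      then show ?thesis using False by (simp add: TT_Y)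
    next
      case True
      have "(MM (mY :: _ \<Rightarrow> _ \<Rightarrow> _ \<Rightarrow> 'k) ** NN) $ a $ b
          = (\<Sum>r\<in>UNIV. (if r = b then 1 else 0) - (if r = a \<and> a \<noteq> b then 1 else 0))"
        unfolding e
      proof (rule sum.cong[OF refl])
        fix r
        show "TT (mY :: _ \<Rightarrow> _ \<Rightarrow> _ \<Rightarrow> 'k) r a * ((if r = b then 1 else 0) - (if h b = 0 \<and> r \<noteq> b then 1 else 0))
            = (if r = b then 1 else 0) - (if r = a \<and> a \<noteq> b then 1 else 0)"
        proof (cases "r = b")
          case True
          then show ?thesis using \<open>h b = 0\<close> by (simp add: TT_Y)
        next
          case False
          then have "h r \<noteq> 0" using \<open>h b = 0\<close> h_inj by metis
          then show ?thesis using False True by (auto simp: TT_Y)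
        qed
      qed
      also have "\<dots> = (if a = b then 1 else 0)"
        by (simp add: sum_subtractf)
      finally show ?thesis .
    qed
  qed
  then show ?thesis by (simp add: vec_eq_iff mat_def)
qed

lemma det_MM_Y: "det (MM (mY :: _ \<Rightarrow> _ \<Rightarrow> _ \<Rightarrow> 'k::field)) \<noteq> 0"
proof
  assume "det (MM (mY :: _ \<Rightarrow> _ \<Rightarrow> _ \<Rightarrow> 'k::field)) = 0"
  then have "det (MM (mY :: _ \<Rightarrow> _ \<Rightarrow> _ \<Rightarrow> 'k::field) ** NN) = 0" by (simp add: det_mul)
  then show False by (simp add: MM_Y_inv det_I)
qed

lemma vv_Y: "vv (mY :: _ \<Rightarrow> _ \<Rightarrow> _ \<Rightarrow> 'k::field) = (\<lambda>i. det (MM (mY :: _ \<Rightarrow> _ \<Rightarrow> _ \<Rightarrow> 'k)) * ev z0 i)"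
proof -
  let ?d = "det (MM (mY :: _ \<Rightarrow> _ \<Rightarrow> _ \<Rightarrow> 'k))"
  have "\<forall>j. (\<Sum>i\<in>UNIV. TT (mY :: _ \<Rightarrow> _ \<Rightarrow> _ \<Rightarrow> 'k) i j * ev z0 i) = tau mY j"
    by (simp add: sum_ev' TT_Y h_z0 tau_Y)
  then have "MM (mY :: _ \<Rightarrow> _ \<Rightarrow> _ \<Rightarrow> 'k) *v (\<chi> k. ev z0 k) = tv mY" using sol_iff by blast
  then have "(\<chi> k. ev z0 k) = (\<chi> k. vv (mY :: _ \<Rightarrow> _ \<Rightarrow> _ \<Rightarrow> 'k) k / ?d)"
    using cramer[OF det_MM_Y] unfolding vv_def by blast
  then have eqk: "ev z0 k = vv (mY :: _ \<Rightarrow> _ \<Rightarrow> _ \<Rightarrow> 'k) k / ?d" for k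
    by (simp add: vec_eq_iff)
  have "vv (mY :: _ \<Rightarrow> _ \<Rightarrow> _ \<Rightarrow> 'k) k = ?d * ev z0 k" for k
  proof -
    have dnz: "?d \<noteq> 0" by (rule det_MM_Y)
    show ?thesis using eqk[of k] dnz by (simp add: field_simps)
  qed
  then show ?thesis by (rule ext)
qed

lemma Lpow_Y: "k < CARD('n) \<Longrightarrow> Lpow (mY :: _ \<Rightarrow> _ \<Rightarrow> _ \<Rightarrow> 'k::field) (ev z0) k (ev z0) = ev (inv h k)"
proof (induction k)
  case 0 then show ?case by (simp add: z0_def)
next
  case (Suc k)
  then have k: "k < CARD('n)" by simp
  have "succ (inv h k) = inv h (Suc k)" unfolding succ_def using h_inv[OF k] Suc.prems by simp
  have "Lpow (mY :: _ \<Rightarrow> _ \<Rightarrow> _ \<Rightarrow> 'k::field) (ev z0) (Suc k) (ev z0) = amul mY (ev z0) (ev (inv h k))"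
    using Suc.IH[OF k] by simp
  also have "\<dots> = mY z0 (inv h k)" by (rule amul_ev_ev)
  also have "\<dots> = ev (inv h (Suc k))"
    using \<open>succ (inv h k) = inv h (Suc k)\<close> by (simp add: fun_eq_iff mY_def h_z0 ev_def)
  finally show ?case .
qed

lemma det_WW_Y: "det (WW (mY :: _ \<Rightarrow> _ \<Rightarrow> _ \<Rightarrow> 'k::field) h) \<noteq> 0"
proof -
  let ?d = "det (MM (mY :: _ \<Rightarrow> _ \<Rightarrow> _ \<Rightarrow> 'k))"
  have ent: "WW (mY :: _ \<Rightarrow> _ \<Rightarrow> _ \<Rightarrow> 'k) h $ l $ j = ?d ^ Suc (h j) * ev j l" for l j
  proof -
    have "WW (mY :: _ \<Rightarrow> _ \<Rightarrow> _ \<Rightarrow> 'k) h $ l $ j = ?d ^ Suc (h j) * Lpow mY (ev z0) (h j) (ev z0) l"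
      unfolding WW_def vv_Y Lpow_scale by simp
    also have "\<dots> = ?d ^ Suc (h j) * ev j l"
    proof -
      have "Lpow (mY :: _ \<Rightarrow> _ \<Rightarrow> _ \<Rightarrow> 'k) (ev z0) (h j) (ev z0) = ev j"
        using Lpow_Y[OF h_lt[of j]] inv_h[of j] by simp
      then show ?thesis by (simp only:)
    qed
    finally show ?thesis .
  qed
  have "det (WW (mY :: _ \<Rightarrow> _ \<Rightarrow> _ \<Rightarrow> 'k) h) = (\<Prod>j\<in>UNIV. WW (mY :: _ \<Rightarrow> _ \<Rightarrow> _ \<Rightarrow> 'k) h $ j $ j)"
    by (rule det_diagonal) (simp add: ent ev_def)
  also have "\<dots> = (\<Prod>j\<in>UNIV. ?d ^ Suc (h j))" by (simp add: ent ev_def)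
  also have "\<dots> \<noteq> 0"
  proof -
    have dnz: "?d \<noteq> 0" by (rule det_MM_Y)
    then show ?thesis by simp
  qed
  finally show ?thesis .
qed

end

theorem theorem4:
  assumes "alg_closed TYPE('k::field)"
    and "(2::'k) \<noteq> 0"
  shows "\<exists>U :: ('n::finite \<times> 'n \<times> 'n \<Rightarrow> 'k) set.
           zariski_open U \<and> U \<noteq> {} \<and>
           (\<forall>c\<in>U. let m = (\<lambda>i j l. c (i, j, l)) in
               simple_alg m \<and> automorphisms m = {id})"
proof -
  have inf: "infinite (UNIV::'k set)" by (rule alg_closed_infinite[OF assms(1)])
  obtain h :: "'n \<Rightarrow> nat" where hb: "bij_betw h UNIV {0..<CARD('n)}"
    using ex_bij_betw_finite_nat[of "UNIV::'n set"] by auto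
  interpret E: enum_n h by unfold_locales (rule hb)
  define F1 where "F1 = (\<lambda>c :: 'n\<times>'n\<times>'n \<Rightarrow> 'k. det (SA (mc c)))"
  define F2 where "F2 = (\<lambda>c :: 'n\<times>'n\<times>'n \<Rightarrow> 'k. det (MM (mc c)) * det (WW (mc c) h))"
  have p1: "F1 \<in> poly_fun" unfolding F1_def by (rule pf_SA)
  have p2: "F2 \<in> poly_fun" unfolding F2_def by (rule poly_fun.mult[OF pf_MM pf_WW])
  define cX where "cX = (\<lambda>(i,j,l). mX (undefined::'n) i j l :: 'k)"
  define cY where "cY = (\<lambda>(i,j,l). E.mY i j l :: 'k)"
  have mcX: "mc cX = mX undefined" unfolding cX_def mc_def by (simp add: fun_eq_iff)
  have mcY: "mc cY = E.mY" unfolding cY_def mc_def by (simp add: fun_eq_iff)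
  have "F1 cX \<noteq> 0" unfolding F1_def mcX by (rule det_SA_mX)
  moreover have "F2 cY \<noteq> 0" unfolding F2_def mcY using E.det_MM_Y E.det_WW_Y by simp
  ultimately obtain x where x: "F1 x * F2 x \<noteq> 0"
    using pf_product_nonzero[OF inf p1 p2] by blast
  define U where "U = {c. F1 c * F2 c \<noteq> 0}"
  have "zariski_open U"
    unfolding zariski_open_def U_def
    by (rule exI[of _ "{\<lambda>c. F1 c * F2 c}"]) (auto intro: poly_fun.mult p1 p2)
  moreover have "U \<noteq> {}" using x unfolding U_def by blast
  moreover have "\<forall>c\<in>U. let m = (\<lambda>i j l. c (i, j, l)) in simple_alg m \<and> automorphisms m = {id}"
  proof
    fix c assume "c \<in> U"
    then have d1: "det (SA (mc c)) \<noteq> 0" and d2: "det (MM (mc c)) \<noteq> 0" and d3: "det (WW (mc c) h) \<noteq> 0"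
      unfolding U_def F1_def F2_def by auto
    have "simple_alg (mc c)" by (rule simple_of_det[OF d1])
    moreover have "automorphisms (mc c) = {id}"
      using rigid[OF d2 d3] id_aut by blast
    ultimately show "let m = (\<lambda>i j l. c (i, j, l)) in simple_alg m \<and> automorphisms m = {id}"
      unfolding Let_def mc_def by simp
  qed
  ultimately show ?thesis by blast
qed

end
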